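(* Let $S$ be $\mathbb{R}$ or $\mathbb{C}$, and let $\boldsymbol{\varepsilon}=(\varepsilon_1,\dots,\varepsilon_{n-1})$, $\boldsymbol{\delta}=(\delta_1,\dots,\delta_{n-1})$ satisfy $-1<\delta_i\le0\le\varepsilon_i$ for $i=1,\dots,n-1$. Then for every $A\in\mathbf{CP}^{\boldsymbol{\varepsilon}}_n(S)$ there exists $B\in\mathbf{CP}^{\boldsymbol{\delta}}_n(S)$ such that $b^{(k)}_{n,n}=a^{(k)}_{n,n}$ for all $k=1,\dots,n$, and for all $k$ and all $i,j\ge k$, $$\big|b^{(k)}_{i,j}-a^{(k)}_{i,j}\big|\le \max_{\min\{i,j\}\le \ell\le n-1}\left( \frac{\Big[\big(\frac{1+\varepsilon_\ell}{1+\delta_\ell}\big)^2-1\Big]\,|a^{(\ell)}_{\ell,\ell}|}{\prod_{p=\min\{i,j\}}^{\ell-1}(1+\delta_p)} + \sum_{m=\min\{i,j\}}^{\ell-1}\frac{(\varepsilon_m-\delta_m)\,|a^{(m)}_{m,m}|}{\prod_{p=\min\{i,j\}}^{m}(1+\delta_p)}\right).$$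
   Context: For an $n\times n$ complex matrix $A=(a_{i,j})$, Gaussian elimination without pivoting is the recursion $a^{(1)}_{i,j}=a_{i,j}$ and $a^{(k+1)}_{i,j}=a^{(k)}_{i,j}-a^{(k)}_{i,k}a^{(k)}_{k,j}/a^{(k)}_{k,k}$ for $k+1\le i,j\le n$, $k=1,\dots,n-1$ (defined when all pivots $a^{(k)}_{k,k}\ne0$); similarly $b^{(k)}_{i,j}$ for $B$. For $S\subseteq\mathbb{C}$ and $\boldsymbol{\varepsilon}=(\varepsilon_1,\dots,\varepsilon_{n-1})$ with each $\varepsilon_i>-1$, $\mathbf{CP}^{\boldsymbol{\varepsilon}}_n(S)$ is the set of invertible $A\in S^{n\times n}$ for which elimination without pivoting is defined and $|a^{(k)}_{i,j}|\le(1+\varepsilon_k)|a^{(k)}_{k,k}|$ for all $k=1,\dots,n-1$ and all $i,j\ge k$ with $(i,j)\ne(k,k)$. Empty products equal $1$ and empty sums equal $0$. *)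

theory Defs
  imports Complex_Main
begin

text \<open>Matrices are functions nat => nat => complex, indexed 1..n.
  ge A k i j is the entry a^(k)_{i,j} of Gaussian elimination without pivoting
  (k starts at 1; ge A 1 = A).\<close>

fun ge :: "(nat \<Rightarrow> nat \<Rightarrow> complex) \<Rightarrow> nat \<Rightarrow> nat \<Rightarrow> nat \<Rightarrow> complex" where
  "ge A 0 i j = A i j"
| "ge A (Suc 0) i j = A i j"
| "ge A (Suc (Suc k)) i j =
     ge A (Suc k) i j - ge A (Suc k) i (Suc k) * ge A (Suc k) (Suc k) j / ge A (Suc k) (Suc k) (Suc k)"

definition invertible_n :: "nat \<Rightarrow> (nat \<Rightarrow> nat \<Rightarrow> complex) \<Rightarrow> bool" where
  "invertible_n n A \<longleftrightarrow> (\<exists>B. \<forall>i\<in>{1..n}. \<forall>j\<in>{1..n}.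
      (\<Sum>l=1..n. A i l * B l j) = (if i = j then 1 else 0))"

definition CP :: "(nat \<Rightarrow> real) \<Rightarrow> nat \<Rightarrow> complex set \<Rightarrow> (nat \<Rightarrow> nat \<Rightarrow> complex) \<Rightarrow> bool" where
  "CP eps n S A \<longleftrightarrow>
     (\<forall>i\<in>{1..n}. \<forall>j\<in>{1..n}. A i j \<in> S) \<and>
     invertible_n n A \<and>
     (\<forall>k\<in>{1..n-1}. ge A k k k \<noteq> 0) \<and>
     (\<forall>k\<in>{1..n-1}. \<forall>i\<in>{k..n}. \<forall>j\<in>{k..n}. (i, j) \<noteq> (k, k) \<longrightarrow>
        cmod (ge A k i j) \<le> (1 + eps k) * cmod (ge A k k k))"

text \<open>The bound of the theorem; the max over an empty range (only when min i j = n) is taken as 0.\<close>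
definition bnd :: "(nat \<Rightarrow> real) \<Rightarrow> (nat \<Rightarrow> real) \<Rightarrow> nat \<Rightarrow> (nat \<Rightarrow> nat \<Rightarrow> complex) \<Rightarrow> nat \<Rightarrow> nat \<Rightarrow> real" where
  "bnd eps del n A i j =
     (let r = min i j in
      if {r..n-1} = {} then 0 else
      Max ((\<lambda>l. (((1 + eps l) / (1 + del l))^2 - 1) * cmod (ge A l l l)
                   / (\<Prod>p=r..<l. 1 + del p)
               + (\<Sum>m=r..<l. (eps m - del m) * cmod (ge A m m m) / (\<Prod>p=r..m. 1 + del p)))
           ` {r..n-1}))"

end

theory Submission
  imports Defs "Jordan_Normal_Form.Determinant"
begin


lemma telescope:
  "1 \<le> k \<Longrightarrow> k \<le> i \<Longrightarrow> k \<le> j \<Longrightarrow>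
   A i j = (\<Sum>T=1..<k. ge A T i T * ge A T T j / ge A T T T) + ge A k i j"
proof (induction k)
  case 0 then show ?case by simp
next
  case (Suc k)
  show ?case
  proof (cases "k = 0")
    case True then show ?thesis by simp
  next
    case False
    then obtain k' where k': "k = Suc k'" by (cases k) auto
    have "A i j = (\<Sum>T=1..<k. ge A T i T * ge A T T j / ge A T T T) + ge A k i j"
      using Suc False by simp
    moreover have "ge A (Suc k) i j = ge A k i j - ge A k i k * ge A k k j / ge A k k k"
      using k' by simp
    moreover have "(\<Sum>T=1..<Suc k. ge A T i T * ge A T T j / ge A T T T) =
       (\<Sum>T=1..<k. ge A T i T * ge A T T j / ge A T T T) + ge A k i k * ge A k k j / ge A k k k"
      using False by simp
    ultimately show ?thesis by simp
  qed
qed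

definition wt :: "(nat \<Rightarrow> real) \<Rightarrow> nat \<Rightarrow> nat \<Rightarrow> nat \<Rightarrow> real" where
  "wt s r i j = (if i = r then s r else 1) * (if j = r then s r else 1)"

definition Bm :: "(nat \<Rightarrow> nat \<Rightarrow> complex) \<Rightarrow> (nat \<Rightarrow> real) \<Rightarrow> nat \<Rightarrow> nat \<Rightarrow> complex" where
  "Bm A s i j = A i j + of_real (wt s (min i j) i j - 1) * ge A (min i j) i j"

lemma ge_Bm:
  assumes s: "\<And>m. s m \<noteq> 0"
  shows "1 \<le> k \<Longrightarrow> k \<le> i \<Longrightarrow> k \<le> j \<Longrightarrow>
    ge (Bm A s) k i j = ge A k i j + of_real (wt s (min i j) i j - 1) * ge A (min i j) i j"
proof (induction k arbitrary: i j)
  case 0 then show ?case by simp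
next
  case (Suc k)
  show ?case
  proof (cases "k = 0")
    case True then show ?thesis by (simp add: Bm_def)
  next
    case False
    then obtain k' where k': "k = Suc k'" by (cases k) auto
    have ik: "ge (Bm A s) k i k = of_real (s k) * ge A k i k"
      using Suc.IH[of i k] Suc.prems False by (simp add: wt_def algebra_simps)
    have kj: "ge (Bm A s) k k j = of_real (s k) * ge A k k j"
      using Suc.IH[of k j] Suc.prems False by (simp add: wt_def algebra_simps)
    have kk: "ge (Bm A s) k k k = of_real (s k) * of_real (s k) * ge A k k k"
      using Suc.IH[of k k] Suc.prems False by (simp add: wt_def algebra_simps)
    have ij: "ge (Bm A s) k i j = ge A k i j + of_real (wt s (min i j) i j - 1) * ge A (min i j) i j"
      using Suc.IH[of i j] Suc.prems False by simp
    have sk: "(of_real (s k) :: complex) \<noteq> 0" using s by simp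
    have rat: "of_real (s k) * ge A k i k * (of_real (s k) * ge A k k j) /
          (of_real (s k) * of_real (s k) * ge A k k k) = ge A k i k * ge A k k j / ge A k k k"
      using sk by (cases "ge A k k k = 0") (auto simp: field_simps)
    have "ge (Bm A s) (Suc k) i j = ge (Bm A s) k i j - ge (Bm A s) k i k * ge (Bm A s) k k j / ge (Bm A s) k k k"
      using k' by simp
    also have "\<dots> = ge A (Suc k) i j + of_real (wt s (min i j) i j - 1) * ge A (min i j) i j"
      unfolding ik kj kk ij rat using k' by simp
    finally show ?thesis .
  qed
qed




lemma LU_entry:
  assumes piv: "\<forall>m\<in>{1..n-1}. ge A m m m \<noteq> 0" and i: "i < n" and j: "j < n"
  shows "(\<Sum>t<n. (if Suc t < Suc i then ge A (Suc t) (Suc i) (Suc t) / ge A (Suc t) (Suc t) (Suc t)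
                    else if Suc t = Suc i then 1 else 0) *
                   (if Suc t \<le> Suc j then ge A (Suc t) (Suc t) (Suc j) else 0))
         = A (Suc i) (Suc j)" (is "(\<Sum>t<n. ?f t) = _")
proof -
  define R where "R = min i j"
  have R: "R < n" using i j R_def by simp
  have "(\<Sum>t<n. ?f t) = (\<Sum>t<Suc R. ?f t)"
    by (rule sum.mono_neutral_right) (use R in \<open>auto simp: R_def\<close>)
  also have "\<dots> = (\<Sum>t<R. ?f t) + ?f R" by simp
  also have "(\<Sum>t<R. ?f t) = (\<Sum>t<R. ge A (Suc t) (Suc i) (Suc t) * ge A (Suc t) (Suc t) (Suc j) / ge A (Suc t) (Suc t) (Suc t))"
    by (rule sum.cong) (auto simp: R_def)
  also have "\<dots> = (\<Sum>T=1..<Suc R. ge A T (Suc i) T * ge A T T (Suc j) / ge A T T T)"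
    using sum.shift_bounds_Suc_ivl[of "\<lambda>T. ge A T (Suc i) T * ge A T T (Suc j) / ge A T T T" 0 R]
    by (simp add: atLeast0LessThan)
  also have "?f R = ge A (Suc R) (Suc i) (Suc j)"
  proof (cases "R = i")
    case True then show ?thesis by (auto simp: R_def)
  next
    case False
    then have "R = j" "j < i" by (auto simp: R_def)
    moreover have "ge A (Suc j) (Suc j) (Suc j) \<noteq> 0" using piv \<open>j < i\<close> i by auto
    ultimately show ?thesis by auto
  qed
  finally show ?thesis using telescope[of "Suc R" "Suc i" "Suc j" A] by (simp add: R_def)
qed

definition Lmat :: "nat \<Rightarrow> (nat \<Rightarrow> nat \<Rightarrow> complex) \<Rightarrow> complex mat" where
  "Lmat n A = mat n n (\<lambda>(i,j). if Suc j < Suc i then ge A (Suc j) (Suc i) (Suc j) / ge A (Suc j) (Suc j) (Suc j)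
                    else if Suc j = Suc i then 1 else 0)"
definition Umat :: "nat \<Rightarrow> (nat \<Rightarrow> nat \<Rightarrow> complex) \<Rightarrow> complex mat" where
  "Umat n A = mat n n (\<lambda>(i,j). if Suc i \<le> Suc j then ge A (Suc i) (Suc i) (Suc j) else 0)"
definition Amat :: "nat \<Rightarrow> (nat \<Rightarrow> nat \<Rightarrow> complex) \<Rightarrow> complex mat" where
  "Amat n A = mat n n (\<lambda>(i,j). A (Suc i) (Suc j))"

lemma LU:
  assumes piv: "\<forall>m\<in>{1..n-1}. ge A m m m \<noteq> 0"
  shows "Amat n A = Lmat n A * Umat n A"
proof (rule eq_matI)
  fix i j assume i: "i < dim_row (Lmat n A * Umat n A)" and j: "j < dim_col (Lmat n A * Umat n A)"
  then have i': "i < n" and j': "j < n" by (auto simp: Lmat_def Umat_def)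
  have "(Lmat n A * Umat n A) $$ (i,j) = (\<Sum>t\<in>{0..<n}. Lmat n A $$ (i,t) * Umat n A $$ (t,j))"
    using i' j' by (simp add: Lmat_def Umat_def scalar_prod_def)
  also have "\<dots> = (\<Sum>t\<in>{0..<n}. (if Suc t < Suc i then ge A (Suc t) (Suc i) (Suc t) / ge A (Suc t) (Suc t) (Suc t)
                    else if Suc t = Suc i then 1 else 0) *
                   (if Suc t \<le> Suc j then ge A (Suc t) (Suc t) (Suc j) else 0))"
    by (rule sum.cong[OF refl]) (use i' j' in \<open>auto simp: Lmat_def Umat_def\<close>)
  also have "\<dots> = A (Suc i) (Suc j)"
    using LU_entry[OF piv i' j'] by (simp add: atLeast0LessThan)
  finally show "Amat n A $$ (i,j) = (Lmat n A * Umat n A) $$ (i,j)"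
    using i' j' by (simp add: Amat_def)
qed (auto simp: Amat_def Lmat_def Umat_def)

lemma det_Amat:
  assumes piv: "\<forall>m\<in>{1..n-1}. ge A m m m \<noteq> 0"
  shows "det (Amat n A) = (\<Prod>m<n. ge A (Suc m) (Suc m) (Suc m))"
proof -
  have L: "Lmat n A \<in> carrier_mat n n" and U: "Umat n A \<in> carrier_mat n n"
    by (auto simp: Lmat_def Umat_def)
  have dL: "det (Lmat n A) = 1"
    by (subst det_lower_triangular[OF _ L]) (auto simp: Lmat_def prod_list_diag_prod)
  have dU: "det (Umat n A) = (\<Prod>m<n. ge A (Suc m) (Suc m) (Suc m))"
    by (subst det_upper_triangular[OF _ U]) (auto simp: Umat_def prod_list_diag_prod atLeast0LessThan)
  show ?thesis using LU[OF piv] det_mult[OF L U] dL dU by simp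
qed

lemma inv_fun_mat: "invertible_n n A \<longleftrightarrow> (\<exists>X\<in>carrier_mat n n. Amat n A * X = 1\<^sub>m n)"
proof
  assume "invertible_n n A"
  then obtain B where B: "\<forall>i\<in>{1..n}. \<forall>j\<in>{1..n}. (\<Sum>l=1..n. A i l * B l j) = (if i = j then 1 else 0)"
    unfolding invertible_n_def by blast
  let ?X = "mat n n (\<lambda>(i,j). B (Suc i) (Suc j))"
  have "Amat n A * ?X = 1\<^sub>m n"
  proof (rule eq_matI)
    fix i j assume "i < dim_row (1\<^sub>m n)" "j < dim_col (1\<^sub>m n)"
    then have ij: "i < n" "j < n" by auto
    have "(Amat n A * ?X) $$ (i,j) = (\<Sum>l\<in>{0..<n}. A (Suc i) (Suc l) * B (Suc l) (Suc j))"
      using ij by (simp add: Amat_def scalar_prod_def)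
    also have "\<dots> = (\<Sum>l=1..n. A (Suc i) l * B l (Suc j))"
      using sum.shift_bounds_Suc_ivl[of "\<lambda>l. A (Suc i) l * B l (Suc j)" 0 n]
      by (simp add: atLeastLessThanSuc_atLeastAtMost)
    also have "\<dots> = (if i = j then 1 else 0)" using B ij by auto
    finally show "(Amat n A * ?X) $$ (i,j) = 1\<^sub>m n $$ (i,j)" using ij by simp
  qed (auto simp: Amat_def)
  then show "\<exists>X\<in>carrier_mat n n. Amat n A * X = 1\<^sub>m n" by auto
next
  assume "\<exists>X\<in>carrier_mat n n. Amat n A * X = 1\<^sub>m n"
  then obtain X where X: "X \<in> carrier_mat n n" "Amat n A * X = 1\<^sub>m n" by blast
  define B where "B i j = X $$ (i - 1, j - 1)" for i j
  have "\<forall>i\<in>{1..n}. \<forall>j\<in>{1..n}. (\<Sum>l=1..n. A i l * B l j) = (if i = j then 1 else 0)"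
  proof (intro ballI)
    fix i j assume i: "i \<in> {1..n}" and j: "j \<in> {1..n}"
    have "(\<Sum>l=1..n. A i l * B l j) = (\<Sum>l\<in>{0..<n}. A (Suc (i-1)) (Suc l) * X $$ (l, j - 1))"
      using i sum.shift_bounds_Suc_ivl[of "\<lambda>l. A i l * B l j" 0 n]
      by (simp add: atLeastLessThanSuc_atLeastAtMost B_def)
    also have "\<dots> = (Amat n A * X) $$ (i-1, j-1)"
    proof -
      have "i - 1 < n" "j - 1 < n" using i j by auto
      then show ?thesis using X(1) by (simp add: Amat_def scalar_prod_def)
    qed
    also have "\<dots> = (if i = j then 1 else 0)" using X(2) i j by auto
    finally show "(\<Sum>l=1..n. A i l * B l j) = (if i = j then 1 else 0)" .
  qed
  then show "invertible_n n A" unfolding invertible_n_def by blast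
qed

lemma inv_det: "invertible_n n A \<longleftrightarrow> det (Amat n A) \<noteq> 0"
proof
  assume "invertible_n n A"
  then obtain X where X: "X \<in> carrier_mat n n" "Amat n A * X = 1\<^sub>m n" using inv_fun_mat by blast
  have "det (Amat n A) * det X = 1"
    using det_mult[of "Amat n A" n X] X by (simp add: Amat_def)
  then show "det (Amat n A) \<noteq> 0" by auto
next
  assume d: "det (Amat n A) \<noteq> 0"
  have C: "Amat n A \<in> carrier_mat n n" by (simp add: Amat_def)
  from det_non_zero_imp_unit[OF C d, of "()"]
  obtain X where "X \<in> carrier_mat n n" "Amat n A * X = 1\<^sub>m n"
    unfolding Units_def ring_mat_def by auto
  then show "invertible_n n A" using inv_fun_mat by blast
qed




fun Dr :: "(nat \<Rightarrow> real) \<Rightarrow> (nat \<Rightarrow> real) \<Rightarrow> (nat \<Rightarrow> nat \<Rightarrow> complex) \<Rightarrow> nat \<Rightarrow> nat \<Rightarrow> real" where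
  "Dr eps del A n 0 = 0"
| "Dr eps del A n (Suc t) = max ((((1 + eps (n - Suc t)) / (1 + del (n - Suc t)))^2 - 1) * cmod (ge A (n - Suc t) (n - Suc t) (n - Suc t)))
     (((eps (n - Suc t) - del (n - Suc t)) * cmod (ge A (n - Suc t) (n - Suc t) (n - Suc t)) + Dr eps del A n t) / (1 + del (n - Suc t)))"

definition DD where "DD eps del A n k = Dr eps del A n (n - k)"

definition fl :: "(nat \<Rightarrow> real) \<Rightarrow> (nat \<Rightarrow> real) \<Rightarrow> (nat \<Rightarrow> nat \<Rightarrow> complex) \<Rightarrow> nat \<Rightarrow> nat \<Rightarrow> real" where
  "fl eps del A r l = (((1 + eps l) / (1 + del l))^2 - 1) * cmod (ge A l l l)
                   / (\<Prod>p=r..<l. 1 + del p)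
               + (\<Sum>m=r..<l. (eps m - del m) * cmod (ge A m m m) / (\<Prod>p=r..m. 1 + del p))"

lemma bnd_fl: "bnd eps del n A i j = (if {min i j..n-1} = {} then 0 else Max (fl eps del A (min i j) ` {min i j..n-1}))"
  unfolding bnd_def fl_def Let_def by simp

context
  fixes n :: nat and eps del :: "nat \<Rightarrow> real" and A :: "nat \<Rightarrow> nat \<Rightarrow> complex"
  assumes hd: "\<forall>i\<in>{1..n-1}. -1 < del i \<and> del i \<le> 0 \<and> 0 \<le> eps i"
  and piv: "\<forall>k\<in>{1..n-1}. ge A k k k \<noteq> 0"
  and gr: "\<forall>k\<in>{1..n-1}. \<forall>i\<in>{k..n}. \<forall>j\<in>{k..n}. (i, j) \<noteq> (k, k) \<longrightarrow>
        cmod (ge A k i j) \<le> (1 + eps k) * cmod (ge A k k k)"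
begin

abbreviation "D \<equiv> DD eps del A n"
abbreviation "a k \<equiv> cmod (ge A k k k)"
abbreviation "c k \<equiv> (1 + eps k) / (1 + del k)"

lemma D_n: "D n = 0" by (simp add: DD_def)

lemma D_rec: "k < n \<Longrightarrow> D k = max ((c k ^2 - 1) * a k) (((eps k - del k) * a k + D (Suc k)) / (1 + del k))"
proof -
  assume k: "k < n"
  then have e: "n - k = Suc (n - Suc k)" by simp
  have e2: "n - Suc (n - Suc k) = k" using k by simp
  show ?thesis unfolding DD_def e Dr.simps e2 ..
qed

lemma hk: "1 \<le> k \<Longrightarrow> k < n \<Longrightarrow> -1 < del k \<and> del k \<le> 0 \<and> 0 \<le> eps k"
  using hd by auto

lemma c_ge: "1 \<le> k \<Longrightarrow> k < n \<Longrightarrow> 1 + eps k \<le> c k"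
proof -
  assume "1 \<le> k" "k < n"
  from hk[OF this] have "0 < 1 + del k" "1 + del k \<le> 1" "0 \<le> eps k" by auto
  then show ?thesis by (simp add: le_divide_eq mult_left_le)
qed

lemma c_ge1: "1 \<le> k \<Longrightarrow> k < n \<Longrightarrow> 1 \<le> c k"
  using c_ge hk by force

lemma a_pos: "1 \<le> k \<Longrightarrow> k < n \<Longrightarrow> 0 < a k"
  using piv by auto

lemma D_ge_first: "1 \<le> k \<Longrightarrow> k < n \<Longrightarrow> (c k ^2 - 1) * a k \<le> D k"
  using D_rec by simp

lemma D_nonneg: "1 \<le> k \<Longrightarrow> k \<le> n \<Longrightarrow> 0 \<le> D k"
proof -
  assume k: "1 \<le> k" "k \<le> n"
  show ?thesis
  proof (cases "k = n")
    case True then show ?thesis by (simp add: D_n)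
  next
    case False
    with k have kn: "k < n" by simp
    have "1 \<le> c k ^ 2" using c_ge1[OF k(1) kn] by (simp add: one_le_power)
    then have "0 \<le> (c k ^2 - 1) * a k" by simp
    then show ?thesis using D_ge_first[OF k(1) kn] by linarith
  qed
qed

lemma D_ge_second: "1 \<le> k \<Longrightarrow> k < n \<Longrightarrow> (eps k - del k) * a k + D (Suc k) \<le> (1 + del k) * D k"
proof -
  assume k: "1 \<le> k" "k < n"
  have p: "0 < 1 + del k" using hk[OF k] by auto
  have "((eps k - del k) * a k + D (Suc k)) / (1 + del k) \<le> D k" using D_rec[OF k(2)] by simp
  then show ?thesis using p by (simp add: divide_le_eq mult.commute)
qed

lemma D_mono: "1 \<le> k \<Longrightarrow> k < n \<Longrightarrow> D (Suc k) \<le> D k"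
proof -
  assume k: "1 \<le> k" "k < n"
  have h: "0 < 1 + del k" "1 + del k \<le> 1" "del k \<le> eps k" using hk[OF k] by auto
  have g: "0 \<le> (eps k - del k) * a k" using h by simp
  have d0: "0 \<le> D k" using D_nonneg k by simp
  have "D (Suc k) \<le> (1 + del k) * D k" using D_ge_second[OF k] g by linarith
  also have "\<dots> \<le> D k" using h d0 by (simp add: mult_left_le_one_le)
  finally show ?thesis .
qed

lemma D_le: "1 \<le> k \<Longrightarrow> k < r \<Longrightarrow> r \<le> n \<Longrightarrow> D r \<le> D (Suc k)"
proof (induction r)
  case 0 then show ?case by simp
next
  case (Suc r)
  show ?case
  proof (cases "k < r")
    case True
    then have "D (Suc r) \<le> D r" using D_mono[of r] Suc.prems by simp
    also have "D r \<le> D (Suc k)" using Suc True by simp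
    finally show ?thesis .
  next
    case False then have "r = k" using Suc.prems by simp
    then show ?thesis by simp
  qed
qed

definition ss :: "nat \<Rightarrow> real" where
  "ss k = (if k \<in> {1..n-1} then sqrt (1 + D k / a k) else 1)"

lemma ss_pos: "0 < ss m"
proof (cases "m \<in> {1..n-1}")
  case True
  then have "0 \<le> D m / a m" using D_nonneg a_pos by auto
  then show ?thesis using True by (simp add: ss_def)
next
  case False then have "ss m = 1" unfolding ss_def by (simp only: if_False)
  then show ?thesis by simp
qed

lemma ss_sq: "1 \<le> k \<Longrightarrow> k < n \<Longrightarrow> (ss k ^ 2 - 1) * a k = D k"
proof -
  assume k: "1 \<le> k" "k < n"
  have "0 \<le> D k / a k" using D_nonneg a_pos k by auto
  then have "ss k ^ 2 = 1 + D k / a k" using k by (simp add: ss_def)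
  then show ?thesis using a_pos[OF k] by (simp add: field_simps)
qed

lemma ss_ge_c: "1 \<le> k \<Longrightarrow> k < n \<Longrightarrow> c k \<le> ss k"
proof -
  assume k: "1 \<le> k" "k < n"
  have "(c k ^ 2 - 1) * a k \<le> (ss k ^ 2 - 1) * a k"
    using ss_sq[OF k] D_ge_first[OF k] by simp
  then have "c k ^ 2 - 1 \<le> ss k ^ 2 - 1" using a_pos[OF k] by (simp add: mult_le_cancel_right)
  then have "c k ^ 2 \<le> ss k ^ 2" by simp
  moreover have "0 \<le> ss k" using ss_pos less_imp_le by blast
  ultimately show ?thesis by (rule power2_le_imp_le)
qed

lemma ss_growth: "1 \<le> k \<Longrightarrow> k < n \<Longrightarrow> (1 + eps k) * a k + D (Suc k) \<le> (1 + del k) * (ss k ^ 2 * a k)"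
proof -
  assume k: "1 \<le> k" "k < n"
  have "ss k ^ 2 * a k = a k + D k" using ss_sq[OF k] by (simp add: algebra_simps)
  then show ?thesis using D_ge_second[OF k] by (simp add: algebra_simps)
qed

lemma ss_row: "1 \<le> k \<Longrightarrow> k < n \<Longrightarrow> ss k * ((1 + eps k) * a k) \<le> (1 + del k) * (ss k ^ 2 * a k)"
proof -
  assume k: "1 \<le> k" "k < n"
  have p: "0 < 1 + del k" using hk[OF k] by auto
  have "1 + eps k \<le> (1 + del k) * ss k" using ss_ge_c[OF k] p by (simp add: divide_le_eq mult.commute)
  then have "ss k * ((1 + eps k) * a k) \<le> ss k * (((1 + del k) * ss k) * a k)"
    using ss_pos a_pos[OF k] by (intro mult_left_mono mult_right_mono) (auto intro: less_imp_le)
  then show ?thesis by (simp add: power2_eq_square algebra_simps)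
qed

lemma diff_bound:
  assumes r: "1 \<le> r" "r \<le> n" and ij: "i \<le> n" "j \<le> n" "min i j = r"
  shows "\<bar>wt ss r i j - 1\<bar> * cmod (ge A r i j) \<le> D r"
proof (cases "r = n")
  case True
  then have "i = n" "j = n" using ij by auto
  then show ?thesis using True by (simp add: wt_def ss_def D_n)
next
  case False
  then have rn: "r < n" using r by simp
  have s1: "1 \<le> ss r" using ss_ge_c[OF r(1) rn] c_ge1[OF r(1) rn] by linarith
  show ?thesis
  proof (cases "i = r \<and> j = r")
    case True
    have sq1: "1 \<le> ss r ^ 2" using s1 by (simp add: one_le_power)
    from True have "\<bar>wt ss r i j - 1\<bar> * cmod (ge A r i j) = \<bar>ss r ^ 2 - 1\<bar> * a r"
      by (simp add: wt_def power2_eq_square)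
    then have "\<bar>wt ss r i j - 1\<bar> * cmod (ge A r i j) = (ss r ^ 2 - 1) * a r"
      using sq1 by simp
    then show ?thesis using ss_sq[OF r(1) rn] by simp
  next
    case False
    then have w: "wt ss r i j = ss r" using ij by (auto simp: wt_def)
    have "(i, j) \<noteq> (r, r)" using False by auto
    moreover have "i \<in> {r..n}" "j \<in> {r..n}" using ij by auto
    ultimately have g: "cmod (ge A r i j) \<le> (1 + eps r) * a r" using gr r rn by auto
    have "\<bar>wt ss r i j - 1\<bar> * cmod (ge A r i j) = (ss r - 1) * cmod (ge A r i j)" using w s1 by simp
    also have "\<dots> \<le> (ss r - 1) * ((1 + eps r) * a r)" using g s1 by (simp add: mult_left_mono)
    also have "\<dots> \<le> (ss r - 1) * ((ss r + 1) * a r)"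
    proof -
      have "1 + eps r \<le> ss r + 1" using ss_ge_c[OF r(1) rn] c_ge[OF r(1) rn] s1 hk[OF r(1) rn] by linarith
      then show ?thesis using s1 a_pos[OF r(1) rn] by (intro mult_left_mono mult_right_mono) auto
    qed
    also have "\<dots> = (ss r ^ 2 - 1) * a r" by (simp add: power2_eq_square algebra_simps)
    finally show ?thesis using ss_sq[OF r(1) rn] by simp
  qed
qed


lemma fl_rec:
  assumes r: "1 \<le> r" "r < l" "l < n"
  shows "fl eps del A r l = ((eps r - del r) * a r + fl eps del A (Suc r) l) / (1 + del r)"
proof -
  define d where "d = 1 + del r"
  have d: "d \<noteq> 0" using hk[of r] r by (auto simp: d_def)
  define X where "X = (((1 + eps l) / (1 + del l))^2 - 1) * a l"
  define G where "G q m = (eps m - del m) * a m / (\<Prod>p=q..m. 1 + del p)" for q m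
  have P: "(\<Prod>p=r..<l. 1 + del p) = d * (\<Prod>p=Suc r..<l. 1 + del p)"
    using r by (simp add: prod.atLeast_Suc_lessThan d_def)
  have S1: "(\<Sum>m=r..<l. G r m) = G r r + (\<Sum>m=Suc r..<l. G r m)"
    using r by (simp add: sum.atLeast_Suc_lessThan)
  have S2: "(\<Sum>m=Suc r..<l. G r m) = (\<Sum>m=Suc r..<l. G (Suc r) m / d)"
  proof (rule sum.cong[OF refl])
    fix m assume m: "m \<in> {Suc r..<l}"
    have "(\<Prod>p=r..m. 1 + del p) = d * (\<Prod>p=Suc r..m. 1 + del p)"
      using m by (simp add: prod.atLeast_Suc_atMost d_def)
    then show "G r m = G (Suc r) m / d" by (simp add: G_def)
  qed
  have Grr: "G r r = (eps r - del r) * a r / d" by (simp add: G_def d_def)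
  have "fl eps del A r l = X / (\<Prod>p=r..<l. 1 + del p) + (\<Sum>m=r..<l. G r m)"
    by (simp add: fl_def X_def G_def)
  also have "\<dots> = X / (d * (\<Prod>p=Suc r..<l. 1 + del p)) + (eps r - del r) * a r / d + (\<Sum>m=Suc r..<l. G (Suc r) m) / d"
    unfolding P S1 S2 Grr by (simp add: sum_divide_distrib)
  also have "\<dots> = ((eps r - del r) * a r + (X / (\<Prod>p=Suc r..<l. 1 + del p) + (\<Sum>m=Suc r..<l. G (Suc r) m))) / d"
    by (simp add: add_divide_distrib)
  also have "X / (\<Prod>p=Suc r..<l. 1 + del p) + (\<Sum>m=Suc r..<l. G (Suc r) m) = fl eps del A (Suc r) l"
    by (simp add: fl_def X_def G_def)
  finally show ?thesis by (simp add: d_def)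
qed

lemma fl_rr: "fl eps del A r r = (c r ^ 2 - 1) * a r"
  by (simp add: fl_def)

lemma D_fl: "1 \<le> r \<Longrightarrow> r + dd = n - 1 \<Longrightarrow> \<exists>l\<in>{r..n-1}. D r \<le> fl eps del A r l"
proof (induction dd arbitrary: r)
  case 0
  then have r: "1 \<le> r" "r < n" "Suc r = n" by auto
  have p: "0 < 1 + del r" "1 + del r \<le> 1" "del r \<le> eps r" using hk[OF r(1,2)] by auto
  have g0: "0 \<le> (eps r - del r) * a r" using p by simp
  have "(eps r - del r) * a r / (1 + del r) \<le> (c r ^ 2 - 1) * a r"
  proof -
    have "(eps r - del r) * a r / (1 + del r) \<le> (eps r - del r) * a r / (1 + del r) * c r"
    proof -
      have "0 \<le> (eps r - del r) * a r / (1 + del r)" using g0 p by simp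
      from mult_left_mono[OF c_ge1[OF r(1,2)] this] show ?thesis by simp
    qed
    also have "\<dots> = (c r ^ 2 - c r) * a r"
    proof -
      have "(eps r - del r) * a r / (1 + del r) = (c r - 1) * a r"
        using p by (simp add: field_simps)
      moreover have "\<And>x y z::real. x = (y - 1) * z \<Longrightarrow> x * y = (y^2 - y) * z"
        by (simp add: power2_eq_square left_diff_distrib)
      ultimately show ?thesis by blast
    qed
    also have "\<dots> \<le> (c r ^ 2 - 1) * a r"
      using c_ge1[OF r(1,2)] by (simp add: mult_right_mono)
    finally show ?thesis .
  qed
  then have "D r \<le> fl eps del A r r"
    using D_rec[OF r(2)] r(3) D_n by (simp add: fl_rr)
  then show ?case using r by auto
next
  case (Suc dd)
  then have r: "1 \<le> r" "r < n" "Suc r < n" by auto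
  from Suc.IH[of "Suc r"] Suc.prems obtain l where l: "l \<in> {Suc r..n-1}" "D (Suc r) \<le> fl eps del A (Suc r) l"
    by auto
  have p: "0 < 1 + del r" using hk[OF r(1,2)] by auto
  have "((eps r - del r) * a r + D (Suc r)) / (1 + del r) \<le> ((eps r - del r) * a r + fl eps del A (Suc r) l) / (1 + del r)"
    using l(2) p by (simp add: divide_right_mono)
  also have "\<dots> = fl eps del A r l" using fl_rec[of r l] r l(1) by auto
  finally have "D r \<le> max (fl eps del A r r) (fl eps del A r l)"
    using D_rec[OF r(2)] by (simp add: fl_rr)
  then show ?case using l(1) r by (cases "fl eps del A r r \<le> fl eps del A r l") (auto simp: max_def)
qed

lemma D_bnd:
  assumes "1 \<le> r" "r \<le> n" "min i j = r"
  shows "D r \<le> bnd eps del n A i j"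
proof (cases "r = n")
  case True then show ?thesis using assms by (simp add: bnd_fl D_n)
next
  case False
  then have rn: "r < n" using assms by simp
  obtain l where l: "l \<in> {r..n-1}" "D r \<le> fl eps del A r l"
    using D_fl[of r "n - 1 - r"] assms rn by auto
  have ne: "{r..n-1} \<noteq> {}" using l by auto
  have "fl eps del A r l \<le> Max (fl eps del A r ` {r..n-1})"
    using l(1) by (intro Max_ge) auto
  then show ?thesis using l(2) ne assms by (simp add: bnd_fl)
qed

end



lemma ge_real:
  assumes R: "\<forall>i\<in>{1..n}. \<forall>j\<in>{1..n}. A i j \<in> \<real>"
  shows "k \<le> n \<Longrightarrow> i \<in> {1..n} \<Longrightarrow> j \<in> {1..n} \<Longrightarrow> ge A k i j \<in> \<real>"
proof (induction k arbitrary: i j)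
  case 0 then show ?case using R by simp
next
  case (Suc k)
  show ?case
  proof (cases "k = 0")
    case True then show ?thesis using R Suc.prems by simp
  next
    case False
    then obtain k' where k': "k = Suc k'" by (cases k) auto
    have kin: "k \<in> {1..n}" using Suc.prems False by auto
    have "ge A (Suc k) i j = ge A k i j - ge A k i k * ge A k k j / ge A k k k" using k' by simp
    moreover have "ge A k i j \<in> \<real>" "ge A k i k \<in> \<real>" "ge A k k j \<in> \<real>" "ge A k k k \<in> \<real>"
      using Suc.IH Suc.prems kin by auto
    ultimately show ?thesis by (simp add: Reals_diff Reals_mult Reals_divide)
  qed
qed

theorem mainTheorem3:
  fixes n :: nat and eps del :: "nat \<Rightarrow> real" and S :: "complex set"
    and A :: "nat \<Rightarrow> nat \<Rightarrow> complex"
  assumes "S = \<real> \<or> S = UNIV"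
    and "\<forall>i\<in>{1..n-1}. -1 < del i \<and> del i \<le> 0 \<and> 0 \<le> eps i"
    and "CP eps n S A"
  shows "\<exists>B. CP del n S B \<and>
           (\<forall>k\<in>{1..n}. ge B k n n = ge A k n n) \<and>
           (\<forall>k\<in>{1..n}. \<forall>i\<in>{k..n}. \<forall>j\<in>{k..n}.
              cmod (ge B k i j - ge A k i j) \<le> bnd eps del n A i j)"
proof -
  note hd = assms(2)
  have inS: "\<forall>i\<in>{1..n}. \<forall>j\<in>{1..n}. A i j \<in> S" and invA: "invertible_n n A"
    and piv: "\<forall>k\<in>{1..n-1}. ge A k k k \<noteq> 0"
    and gr: "\<forall>k\<in>{1..n-1}. \<forall>i\<in>{k..n}. \<forall>j\<in>{k..n}. (i, j) \<noteq> (k, k) \<longrightarrow>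
        cmod (ge A k i j) \<le> (1 + eps k) * cmod (ge A k k k)"
    using assms(3) unfolding CP_def by auto
  define s where "s = ss n eps del A"
  have spos: "\<And>m. 0 < s m" unfolding s_def by (rule ss_pos[OF hd piv gr])
  have sn: "s n = 1" unfolding s_def ss_def[OF hd piv gr] by auto
  define B where "B = Bm A s"
  have geB: "\<And>k i j. 1 \<le> k \<Longrightarrow> k \<le> i \<Longrightarrow> k \<le> j \<Longrightarrow>
    ge B k i j = ge A k i j + of_real (wt s (min i j) i j - 1) * ge A (min i j) i j"
    unfolding B_def by (rule ge_Bm) (use spos in \<open>auto simp: less_imp_neq[symmetric]\<close>)
  have pivB: "ge B k k k = of_real (s k * s k) * ge A k k k" if k: "1 \<le> k" for k
  proof -
    have e: "ge B k k k = ge A k k k + of_real (s k * s k - 1) * ge A k k k"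
      using geB[of k k k] k by (simp add: wt_def)
    show ?thesis unfolding e by (simp add: algebra_simps)
  qed
  have nn: "\<forall>k\<in>{1..n}. ge B k n n = ge A k n n"
    using geB sn by (simp add: wt_def)
  have diffb: "\<And>k i j. k \<in> {1..n} \<Longrightarrow> i \<in> {k..n} \<Longrightarrow> j \<in> {k..n} \<Longrightarrow>
      cmod (ge B k i j - ge A k i j) \<le> \<bar>wt s (min i j) i j - 1\<bar> * cmod (ge A (min i j) i j)"
  proof -
    fix k i j assume k: "k \<in> {1..n}" and i: "i \<in> {k..n}" and j: "j \<in> {k..n}"
    have e: "ge B k i j - ge A k i j = of_real (wt s (min i j) i j - 1) * ge A (min i j) i j"
      using geB[of k i j] k i j by (simp del: of_real_diff)
    show "cmod (ge B k i j - ge A k i j) \<le> \<bar>wt s (min i j) i j - 1\<bar> * cmod (ge A (min i j) i j)"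
      unfolding e by (simp only: norm_mult norm_of_real order_refl)
  qed
  have Dr_b: "\<And>i j. 1 \<le> min i j \<Longrightarrow> i \<le> n \<Longrightarrow> j \<le> n \<Longrightarrow>
      \<bar>wt s (min i j) i j - 1\<bar> * cmod (ge A (min i j) i j) \<le> DD eps del A n (min i j)"
    unfolding s_def by (rule diff_bound[OF hd piv gr]) auto
  have bndb: "\<forall>k\<in>{1..n}. \<forall>i\<in>{k..n}. \<forall>j\<in>{k..n}. cmod (ge B k i j - ge A k i j) \<le> bnd eps del n A i j"
  proof (intro ballI)
    fix k i j assume k: "k \<in> {1..n}" and i: "i \<in> {k..n}" and j: "j \<in> {k..n}"
    have "cmod (ge B k i j - ge A k i j) \<le> DD eps del A n (min i j)"
      using diffb[OF k i j] Dr_b[of i j] k i j by force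
    also have "\<dots> \<le> bnd eps del n A i j"
      by (rule D_bnd[OF hd piv gr]) (use k i j in auto)
    finally show "cmod (ge B k i j - ge A k i j) \<le> bnd eps del n A i j" .
  qed
  have BS: "\<forall>i\<in>{1..n}. \<forall>j\<in>{1..n}. B i j \<in> S"
  proof (intro ballI)
    fix i j assume i: "i \<in> {1..n}" and j: "j \<in> {1..n}"
    show "B i j \<in> S"
    proof (cases "S = UNIV")
      case True then show ?thesis by simp
    next
      case False
      then have SR: "S = \<real>" using assms(1) by auto
      have "ge A (min i j) i j \<in> \<real>"
        by (rule ge_real) (use inS SR i j in auto)
      moreover have "A i j \<in> \<real>" using inS SR i j by auto
      ultimately show ?thesis unfolding SR B_def Bm_def by (simp add: Reals_add Reals_mult)
    qed
  qed
  have dA: "det (Amat n A) \<noteq> 0" using invA inv_det by blast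
  have pA: "(\<Prod>m<n. ge A (Suc m) (Suc m) (Suc m)) \<noteq> 0" using dA det_Amat[OF piv] by simp
  have pivB': "\<forall>k\<in>{1..n-1}. ge B k k k \<noteq> 0"
    using pivB piv spos by (auto simp: less_imp_neq[symmetric])
  have "(\<Prod>m<n. ge B (Suc m) (Suc m) (Suc m)) \<noteq> 0"
  proof -
    have "ge B (Suc m) (Suc m) (Suc m) \<noteq> 0" if m: "m < n" for m
    proof (cases "Suc m = n")
      case True
      have "ge A (Suc m) (Suc m) (Suc m) \<noteq> 0" using pA m by auto
      then show ?thesis using nn True by auto
    next
      case False then show ?thesis using pivB' m by auto
    qed
    then show ?thesis by simp
  qed
  then have invB: "invertible_n n B" using inv_det det_Amat[OF pivB'] by simp
  have grB: "\<forall>k\<in>{1..n-1}. \<forall>i\<in>{k..n}. \<forall>j\<in>{k..n}. (i, j) \<noteq> (k, k) \<longrightarrow>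
        cmod (ge B k i j) \<le> (1 + del k) * cmod (ge B k k k)"
  proof (intro ballI impI)
    fix k i j assume k: "k \<in> {1..n-1}" and i: "i \<in> {k..n}" and j: "j \<in> {k..n}" and ne: "(i, j) \<noteq> (k, k)"
    have k1: "1 \<le> k" and kn: "k < n" using k by auto
    have sk: "0 < s k" by (rule spos)
    have cB: "cmod (ge B k k k) = s k ^ 2 * cmod (ge A k k k)"
      using pivB[OF k1] sk by (simp add: norm_mult power2_eq_square abs_mult)
    have ss_k: "ss n eps del A k = s k" by (simp add: s_def)
    show "cmod (ge B k i j) \<le> (1 + del k) * cmod (ge B k k k)"
    proof (cases "min i j = k")
      case True
      then have w: "wt s (min i j) i j = s k" using ne by (auto simp: wt_def)
      have "ge B k i j = of_real (s k) * ge A k i j"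
        using geB[of k i j] k1 i j w True by (simp add: algebra_simps)
      then have "cmod (ge B k i j) = s k * cmod (ge A k i j)" using sk by (simp add: norm_mult)
      also have "\<dots> \<le> s k * ((1 + eps k) * cmod (ge A k k k))"
        using gr k i j ne sk by (intro mult_left_mono) auto
      also have "\<dots> \<le> (1 + del k) * (s k ^ 2 * cmod (ge A k k k))"
        using ss_row[OF hd piv gr k1 kn] by (simp add: s_def)
      finally show ?thesis using cB by simp
    next
      case False
      then have r: "k < min i j" using i j by auto
      have e: "ge B k i j = ge A k i j + of_real (wt s (min i j) i j - 1) * ge A (min i j) i j"
        using geB[of k i j] k1 i j by (simp del: of_real_diff)
      have "cmod (ge B k i j) \<le> cmod (ge A k i j) + cmod (of_real (wt s (min i j) i j - 1) * ge A (min i j) i j)"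
        unfolding e by (rule norm_triangle_ineq)
      also have "cmod (of_real (wt s (min i j) i j - 1) * ge A (min i j) i j) = \<bar>wt s (min i j) i j - 1\<bar> * cmod (ge A (min i j) i j)"
        by (simp only: norm_mult norm_of_real)
      finally have "cmod (ge B k i j) \<le> cmod (ge A k i j) + \<bar>wt s (min i j) i j - 1\<bar> * cmod (ge A (min i j) i j)" .
      also have "\<dots> \<le> (1 + eps k) * cmod (ge A k k k) + DD eps del A n (Suc k)"
      proof (rule add_mono)
        show "cmod (ge A k i j) \<le> (1 + eps k) * cmod (ge A k k k)" using gr k i j ne by auto
        have "\<bar>wt s (min i j) i j - 1\<bar> * cmod (ge A (min i j) i j) \<le> DD eps del A n (min i j)"
          using Dr_b[of i j] i j k1 r by auto
        also have "\<dots> \<le> DD eps del A n (Suc k)"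
          by (rule D_le[OF hd piv gr k1 r]) (use i j in auto)
        finally show "\<bar>wt s (min i j) i j - 1\<bar> * cmod (ge A (min i j) i j) \<le> DD eps del A n (Suc k)" .
      qed
      also have "\<dots> \<le> (1 + del k) * (s k ^ 2 * cmod (ge A k k k))"
        using ss_growth[OF hd piv gr k1 kn] by (simp add: s_def)
      finally show ?thesis using cB by simp
    qed
  qed
  have "CP del n S B" unfolding CP_def using BS invB pivB' grB by blast
  then show ?thesis using nn bndb by blast
qed


end
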